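(* Let $N\ge2$, $J=1$, let $h_0,h_1\in\mathbb{R}^N$ satisfy $\|h_0\|=\|h_1\|=1$ and $h_0^{\sf T}h_1=\sin\tau$ with $\tau\in(-\pi/2,\pi/2)$, let $\sigma_0^2,\sigma_1^2,\sigma_n^2>0$ and $c_1\in[-\sigma_0\sigma_1,\sigma_0\sigma_1]$. Then for all $\lambda\ge0$, \[ \mathrm{MSE}(\lambda)=\frac{\delta^2(\sigma_1^2\cos^2\tau+\sigma_n^2)}{g(\lambda)^2}-\frac{2\sigma_n^2\delta\tan\tau}{g(\lambda)}+\sigma_n^2(\tan^2\tau+1), \] where $\delta:=\sigma_n^2\tan\tau-c_1\cos\tau$ and $g(\lambda):=\lambda\cos^2\tau+\sigma_1^2\cos^2\tau+\sigma_n^2>0$. Moreover: 1. If $\delta=0$, then $\mathrm{MSE}(\lambda)=\sigma_n^2(\tan^2\tau+1)$ for all $\lambda\ge0$. 2. If $\delta\ne0$ and $\gamma:=\sigma_n^2\tan\tau/\delta\le0$, then $\mathrm{MSE}(\lambda)$ is decreasing on $[0,\infty)$ and $\inf_{\lambda\ge0}\mathrm{MSE}(\lambda)=\lim_{\lambda\to\infty}\mathrm{MSE}(\lambda)=J_{\rm MSE}(w_{\rm ZF})$, i.e., the ZF beamformer is MSE-optimal among the RZF family. 3. If $\delta\neq0$ and $\gamma>0$, then $\mathrm{MSE}$ is minimized over $[0,\infty)$ by $\lambda=-\dfrac{c_1(\sigma_1^2\cos^2\tau+\sigma_n^2)}{\sigma_n^2\sin\tau}$ (which is $>0$) if $\gamma\in(0,1)$,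 and by $\lambda=0$ if $\gamma\ge1$.
   Context: Real-valued single-interference model: $y(k)=s_0(k)h_0+s_1(k)h_1+n(k)\in\mathbb{R}^N$, with real zero-mean jointly weakly stationary signals $s_0,s_1$, $\sigma_j^2:=E[s_j(k)^2]$, $c_1:=E[s_0(k)s_1(k)]$, and real zero-mean noise $n(k)\sim\mathcal{N}(0,\sigma_n^2I)$ uncorrelated with the signals. $R:=E[y(k)y(k)^{\sf T}]$. For $\lambda\ge0$, $R_\lambda:=R+\lambda h_1h_1^{\sf T}$ and the RZF beamformer is $w_{\rm RZF}(\lambda):=R_\lambda^{-1}h_0/(h_0^{\sf T}R_\lambda^{-1}h_0)$. The ZF beamformer is $w_{\rm ZF}:=R^{-1}H(H^{\sf T}R^{-1}H)^{-1}e_1$ with $H:=[h_0\ h_1]$ and $e_1:=[1,0]^{\sf T}$. The MSE of a beamformer $w$ is $J_{\rm MSE}(w):=E[(w^{\sf T}y(k)-s_0(k))^2]$, and $\mathrm{MSE}(\lambda):=J_{\rm MSE}(w_{\rm RZF}(\lambda))$. *)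

theory Defs
  imports "HOL-Analysis.Analysis"
begin

text \<open>Second-order statistics of the real single-interference model
  y = s0 h0 + s1 h1 + n.  All quantities below are the expectations written out
  in terms of sigma0^2 = E[s0^2], sigma1^2 = E[s1^2], c1 = E[s0 s1],
  E[n n^T] = sigman^2 I, with noise uncorrelated with the signals.\<close>

definition outer :: "real ^ 'n \<Rightarrow> real ^ 'n \<Rightarrow> real ^ 'n ^ 'n" where
  "outer x y = (\<chi> i j. x $ i * y $ j)"

definition Rmat :: "real \<Rightarrow> real \<Rightarrow> real \<Rightarrow> real \<Rightarrow> real ^ 'n \<Rightarrow> real ^ 'n \<Rightarrow> real ^ 'n ^ 'n" where
  "Rmat s0 s1 c1 sn h0 h1 =
     s0\<^sup>2 *\<^sub>R outer h0 h0 + s1\<^sup>2 *\<^sub>R outer h1 h1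
     + c1 *\<^sub>R (outer h0 h1 + outer h1 h0) + sn\<^sup>2 *\<^sub>R mat 1"

definition rvec :: "real \<Rightarrow> real \<Rightarrow> real ^ 'n \<Rightarrow> real ^ 'n \<Rightarrow> real ^ 'n" where
  "rvec s0 c1 h0 h1 = s0\<^sup>2 *\<^sub>R h0 + c1 *\<^sub>R h1"

text \<open>J_MSE(w) = E[(w^T y - s0)^2] = w^T R w - 2 w^T E[y s0] + E[s0^2]\<close>
definition J_MSE :: "real \<Rightarrow> real \<Rightarrow> real \<Rightarrow> real \<Rightarrow> real ^ 'n \<Rightarrow> real ^ 'n \<Rightarrow> real ^ 'n \<Rightarrow> real" where
  "J_MSE s0 s1 c1 sn h0 h1 w =
     w \<bullet> (Rmat s0 s1 c1 sn h0 h1 *v w) - 2 * (w \<bullet> rvec s0 c1 h0 h1) + s0\<^sup>2"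

definition w_RZF :: "real \<Rightarrow> real \<Rightarrow> real \<Rightarrow> real \<Rightarrow> real ^ 'n \<Rightarrow> real ^ 'n \<Rightarrow> real \<Rightarrow> real ^ 'n" where
  "w_RZF s0 s1 c1 sn h0 h1 lam =
     (let Rl = Rmat s0 s1 c1 sn h0 h1 + lam *\<^sub>R outer h1 h1;
          v = matrix_inv Rl *v h0
      in (1 / (h0 \<bullet> v)) *\<^sub>R v)"

definition Hmat :: "real ^ 'n \<Rightarrow> real ^ 'n \<Rightarrow> real ^ 2 ^ 'n" where
  "Hmat h0 h1 = (\<chi> i j. if j = 0 then h0 $ i else h1 $ i)"

definition e1 :: "real ^ 2" where
  "e1 = (\<chi> j. if j = 0 then 1 else 0)"

definition w_ZF :: "real \<Rightarrow> real \<Rightarrow> real \<Rightarrow> real \<Rightarrow> real ^ 'n \<Rightarrow> real ^ 'n \<Rightarrow> real ^ 'n" where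
  "w_ZF s0 s1 c1 sn h0 h1 =
     (let Ri = matrix_inv (Rmat s0 s1 c1 sn h0 h1); H = Hmat h0 h1
      in (Ri ** H ** matrix_inv (transpose H ** Ri ** H)) *v e1)"

definition MSE :: "real \<Rightarrow> real \<Rightarrow> real \<Rightarrow> real \<Rightarrow> real ^ 'n \<Rightarrow> real ^ 'n \<Rightarrow> real \<Rightarrow> real" where
  "MSE s0 s1 c1 sn h0 h1 lam = J_MSE s0 s1 c1 sn h0 h1 (w_RZF s0 s1 c1 sn h0 h1 lam)"

end

theory Submission
  imports Defs
begin

lemma outer_mv: "outer x y *v w = (y \<bullet> w) *\<^sub>R (x::real^'n)"
  by (simp add: vec_eq_iff outer_def matrix_vector_mult_def inner_vec_def sum_distrib_left mult_ac)

lemma Rmat_mv: "Rmat s0 s1 c1 sn h0 h1 *v w =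
   (s0\<^sup>2*(h0 \<bullet> w) + c1*(h1 \<bullet> w)) *\<^sub>R h0 + (s1\<^sup>2*(h1 \<bullet> w) + c1*(h0 \<bullet> w)) *\<^sub>R h1 + sn\<^sup>2 *\<^sub>R w"
  unfolding Rmat_def
  by (simp add: matrix_vector_mult_add_rdistrib scaleR_matrix_vector_assoc[symmetric] outer_mv algebra_simps)

lemma Rl_mv: "(Rmat s0 s1 c1 sn h0 h1 + lam *\<^sub>R outer h1 h1) *v w =
   (s0\<^sup>2*(h0 \<bullet> w) + c1*(h1 \<bullet> w)) *\<^sub>R h0 + ((s1\<^sup>2+lam)*(h1 \<bullet> w) + c1*(h0 \<bullet> w)) *\<^sub>R h1 + sn\<^sup>2 *\<^sub>R w"
  by (simp add: matrix_vector_mult_add_rdistrib scaleR_matrix_vector_assoc[symmetric] outer_mv Rmat_mv algebra_simps)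

lemma pd_invertible:
  fixes A :: "real^'n^'n"
  assumes "\<And>x. x \<noteq> 0 \<Longrightarrow> x \<bullet> (A *v x) > 0"
  shows "invertible A"
proof -
  have "\<forall>x. A *v x = 0 \<longrightarrow> x = 0" using assms by force
  then show ?thesis using invertible_left_inverse matrix_left_invertible_ker by blast
qed

lemma matrix_inv_props:
  assumes "invertible (A::real^'n^'n)"
  shows "A ** matrix_inv A = mat 1" "matrix_inv A ** A = mat 1"
  using assms unfolding invertible_def matrix_inv_def by (metis (mono_tags, lifting) someI_ex)+

lemma inv_apply: assumes "invertible (A::real^'n^'n)" shows "A *v (matrix_inv A *v b) = b"
  by (simp add: assms matrix_inv_props matrix_vector_mul_assoc)
lemma inv_apply2: assumes "invertible (A::real^'n^'n)" shows "matrix_inv A *v (A *v b) = b"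
  by (simp add: assms matrix_inv_props matrix_vector_mul_assoc)

lemma dot_transpose: "y \<bullet> (transpose H *v z) = (H *v y) \<bullet> (z::real^_)"
  by (metis dot_lmul_matrix inner_commute transpose_matrix_vector)

lemma two2: "(2::2) = 0" by simp

lemma Hmat_mv: "Hmat h0 h1 *v y = (y$0) *\<^sub>R h0 + (y$1) *\<^sub>R h1"
  by (simp add: vec_eq_iff Hmat_def matrix_vector_mult_def sum_2 two2 mult_ac)

lemma quad_nonneg:
  fixes s0 s1 c1 p q :: real
  assumes "s0 > 0" "s1 > 0" "- (s0 * s1) \<le> c1" "c1 \<le> s0 * s1"
  shows "0 \<le> s0\<^sup>2*p\<^sup>2 + s1\<^sup>2*q\<^sup>2 + 2*c1*p*q"
proof (cases "p*q \<ge> 0")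
  case True
  have "c1*(p*q) \<ge> -(s0 * s1)*(p*q)" using True assms by (intro mult_right_mono) auto
  moreover have "0 \<le> (s0*p - s1*q)\<^sup>2" by simp
  ultimately show ?thesis by (simp add: power2_eq_square algebra_simps)
next
  case False
  have "c1*(p*q) \<ge> (s0 * s1)*(p*q)" using False assms by (intro mult_right_mono_neg) auto
  moreover have "0 \<le> (s0*p + s1*q)\<^sup>2" by simp
  ultimately show ?thesis by (simp add: power2_eq_square algebra_simps)
qed

lemma Rl_pd:
  fixes h0 h1 x :: "real^'n"
  assumes "s0 > 0" "s1 > 0" "- (s0 * s1) \<le> c1" "c1 \<le> s0 * s1" "sn > 0" "lam \<ge> 0" "x \<noteq> 0"
  shows "x \<bullet> ((Rmat s0 s1 c1 sn h0 h1 + lam *\<^sub>R outer h1 h1) *v x) > 0"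
proof -
  define p where "p = h0 \<bullet> x"
  define q where "q = h1 \<bullet> x"
  have e: "x \<bullet> ((Rmat s0 s1 c1 sn h0 h1 + lam *\<^sub>R outer h1 h1) *v x)
     = (s0\<^sup>2*p\<^sup>2 + s1\<^sup>2*q\<^sup>2 + 2*c1*p*q) + lam*q\<^sup>2 + sn\<^sup>2*(x \<bullet> x)"
    unfolding Rl_mv p_def q_def by (simp add: inner_add_right inner_commute power2_eq_square algebra_simps)
  have "0 \<le> s0\<^sup>2*p\<^sup>2 + s1\<^sup>2*q\<^sup>2 + 2*c1*p*q" using quad_nonneg assms by blast
  moreover have "lam*q\<^sup>2 \<ge> 0" using assms by simp
  moreover have "sn\<^sup>2*(x \<bullet> x) > 0" using assms by simp
  ultimately show ?thesis unfolding e by linarith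
qed

lemma indep:
  fixes h0 h1 :: "real^'n"
  assumes "h0 \<bullet> h0 = 1" "h1 \<bullet> h1 = 1" "h0 \<bullet> h1 = s" "s\<^sup>2 < 1"
    and "a *\<^sub>R h0 + b *\<^sub>R h1 = 0"
  shows "a = 0 \<and> b = 0"
proof -
  have "h0 \<bullet> (a *\<^sub>R h0 + b *\<^sub>R h1) = 0" using assms(5) by simp
  then have 1: "a + b * s = 0" using assms(1-3) by (simp add: inner_add_right)
  have "h1 \<bullet> (a *\<^sub>R h0 + b *\<^sub>R h1) = 0" using assms(5) by simp
  then have 2: "a * s + b = 0" using assms(1-3) by (simp add: inner_add_right inner_commute)
  have "a * (1 - s\<^sup>2) = 0" using 1 2 by algebra
  then have "a = 0" using assms(4) by simp
  then show ?thesis using 2 by simp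
qed

lemma scalar_id:
  fixes s c sn s0 s1 c1 lam p q :: real
  assumes c: "c > 0" and sc: "s\<^sup>2 + c\<^sup>2 = 1" and sn: "sn > 0" and p: "p > 0"
    and g: "g = lam * c\<^sup>2 + s1\<^sup>2 * c\<^sup>2 + sn\<^sup>2" and gp: "g > 0"
    and E1: "sn\<^sup>2 * p = 1 - s0\<^sup>2 * p - c1 * q - s * ((s1\<^sup>2 + lam) * q + c1 * p)"
    and E2: "sn\<^sup>2 * q = s * (1 - s0\<^sup>2 * p - c1 * q) - ((s1\<^sup>2 + lam) * q + c1 * p)"
  shows "(p - lam * q\<^sup>2) / p\<^sup>2 - 2 * (s0\<^sup>2 * p + c1 * q) / p + s0\<^sup>2
     = (sn\<^sup>2 * (s/c) - c1 * c)\<^sup>2 * (s1\<^sup>2 * c\<^sup>2 + sn\<^sup>2) / g\<^sup>2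
       - 2 * sn\<^sup>2 * (sn\<^sup>2 * (s/c) - c1 * c) * (s/c) / g + sn\<^sup>2 * ((s/c)\<^sup>2 + 1)"
proof -
  have u: "q * g = p * (s * sn\<^sup>2 - c1 * c\<^sup>2)" using E1 E2 sc g by algebra
  show ?thesis using c p gp
    apply (simp add: field_simps power2_eq_square)
    using u E1 E2 sc g by algebra
qed

lemma MSE_formula:
  fixes h0 h1 :: "real^'n"
  assumes h00: "h0 \<bullet> h0 = 1" and h11: "h1 \<bullet> h1 = 1" and h01: "h0 \<bullet> h1 = s"
    and s0: "s0 > 0" and s1: "s1 > 0" and c1a: "- (s0 * s1) \<le> c1" and c1b: "c1 \<le> s0 * s1"
    and sn: "sn > 0" and lam: "lam \<ge> 0" and c: "c > 0" and sc: "s\<^sup>2 + c\<^sup>2 = 1"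
    and g: "g = lam * c\<^sup>2 + s1\<^sup>2 * c\<^sup>2 + sn\<^sup>2"
  shows "MSE s0 s1 c1 sn h0 h1 lam
     = (sn\<^sup>2 * (s/c) - c1 * c)\<^sup>2 * (s1\<^sup>2 * c\<^sup>2 + sn\<^sup>2) / g\<^sup>2
       - 2 * sn\<^sup>2 * (sn\<^sup>2 * (s/c) - c1 * c) * (s/c) / g + sn\<^sup>2 * ((s/c)\<^sup>2 + 1)"
proof -
  define Rl where "Rl = Rmat s0 s1 c1 sn h0 h1 + lam *\<^sub>R outer h1 h1"
  have inv: "invertible Rl" unfolding Rl_def
    by (rule pd_invertible, rule Rl_pd) (use assms in auto)
  define v where "v = matrix_inv Rl *v h0"
  have hv: "Rl *v v = h0" unfolding v_def using inv by (rule inv_apply)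
  define p where "p = h0 \<bullet> v"
  define q where "q = h1 \<bullet> v"
  have v0: "v \<noteq> 0" using hv h00 by auto
  have "v \<bullet> (Rl *v v) > 0" unfolding Rl_def by (rule Rl_pd) (use assms v0 in auto)
  then have pp: "p > 0" unfolding p_def using hv by (simp add: inner_commute)
  have hv2: "h0 = (s0\<^sup>2 * p + c1 * q) *\<^sub>R h0 + ((s1\<^sup>2 + lam) * q + c1 * p) *\<^sub>R h1 + sn\<^sup>2 *\<^sub>R v"
    using hv unfolding Rl_def Rl_mv p_def q_def by simp
  have "h0 \<bullet> h0 = h0 \<bullet> ((s0\<^sup>2 * p + c1 * q) *\<^sub>R h0 + ((s1\<^sup>2 + lam) * q + c1 * p) *\<^sub>R h1 + sn\<^sup>2 *\<^sub>R v)"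
    using hv2 by simp
  then have E1: "sn\<^sup>2 * p = 1 - s0\<^sup>2 * p - c1 * q - s * ((s1\<^sup>2 + lam) * q + c1 * p)"
    using h00 h01 by (simp add: inner_add_right p_def algebra_simps)
  have "h1 \<bullet> h0 = h1 \<bullet> ((s0\<^sup>2 * p + c1 * q) *\<^sub>R h0 + ((s1\<^sup>2 + lam) * q + c1 * p) *\<^sub>R h1 + sn\<^sup>2 *\<^sub>R v)"
    using hv2 by simp
  then have E2: "sn\<^sup>2 * q = s * (1 - s0\<^sup>2 * p - c1 * q) - ((s1\<^sup>2 + lam) * q + c1 * p)"
    using h11 h01 by (simp add: inner_add_right q_def inner_commute algebra_simps)
  have wr: "w_RZF s0 s1 c1 sn h0 h1 lam = (1/p) *\<^sub>R v"
    unfolding w_RZF_def Let_def Rl_def[symmetric] v_def[symmetric] p_def ..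
  have Rv: "Rmat s0 s1 c1 sn h0 h1 *v v = h0 - (lam * q) *\<^sub>R h1"
    using hv unfolding Rl_def q_def
    by (simp add: matrix_vector_mult_add_rdistrib scaleR_matrix_vector_assoc[symmetric] outer_mv algebra_simps)
  have Rw: "Rmat s0 s1 c1 sn h0 h1 *v ((1/p) *\<^sub>R v) = (1/p) *\<^sub>R (h0 - (lam * q) *\<^sub>R h1)"
    by (simp add: matrix_scaleR_vector_ac scaleR_matrix_vector_assoc[symmetric] Rv)
  have J: "J_MSE s0 s1 c1 sn h0 h1 ((1/p) *\<^sub>R v) = (p - lam * q\<^sup>2) / p\<^sup>2 - 2 * (s0\<^sup>2 * p + c1 * q) / p + s0\<^sup>2"
    unfolding J_MSE_def rvec_def
    by (simp add: Rw inner_diff_right inner_add_right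
        inner_commute[of v] p_def[symmetric] q_def[symmetric] power2_eq_square field_simps)
  have gp: "g > 0" using g lam c sn by (simp add: add_nonneg_pos add_pos_nonneg)
  show ?thesis unfolding MSE_def wr J
    by (rule scalar_id[OF c sc sn pp g gp E1 E2])
qed

lemma HT_comp: "(transpose (Hmat h0 h1) *v w) $ 0 = h0 \<bullet> w"
    "(transpose (Hmat h0 h1) *v w) $ 1 = h1 \<bullet> (w::real^'n)"
    unfolding transpose_def Hmat_def matrix_vector_mult_def inner_vec_def by (simp_all add: mult.commute)

lemma e1_comp: "e1 $ 0 = 1" "e1 $ 1 = 0"
  by (simp_all add: e1_def)

lemma vec2_eq0: "(y::real^2) = 0 \<longleftrightarrow> y $ 0 = 0 \<and> y $ 1 = 0"
proof
  assume "y $ 0 = 0 \<and> y $ 1 = 0"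
  then show "y = 0" unfolding vec_eq_iff using exhaust_2 two2 by (metis zero_index)
qed simp

lemma ZF_formula:
  fixes h0 h1 :: "real^'n"
  assumes h00: "h0 \<bullet> h0 = 1" and h11: "h1 \<bullet> h1 = 1" and h01: "h0 \<bullet> h1 = s"
    and s0: "s0 > 0" and s1: "s1 > 0" and c1a: "- (s0 * s1) \<le> c1" and c1b: "c1 \<le> s0 * s1"
    and sn: "sn > 0" and c: "c > 0" and sc: "s\<^sup>2 + c\<^sup>2 = 1"
  shows "J_MSE s0 s1 c1 sn h0 h1 (w_ZF s0 s1 c1 sn h0 h1) = sn\<^sup>2 * ((s/c)\<^sup>2 + 1)"
proof -
  define R where "R = Rmat s0 s1 c1 sn h0 h1"
  have Rpd: "x \<bullet> (R *v x) > 0" if "x \<noteq> 0" for x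
    using Rl_pd[OF s0 s1 c1a c1b sn order_refl that] unfolding R_def by simp
  have inv: "invertible R" by (rule pd_invertible, rule Rpd)
  define Ri where "Ri = matrix_inv R"
  have Ripd: "z \<bullet> (Ri *v z) > 0" if "z \<noteq> 0" for z
  proof -
    define x where "x = Ri *v z"
    have Rx: "R *v x = z" unfolding x_def Ri_def using inv by (rule inv_apply)
    have "x \<noteq> 0" using Rx that by auto
    then have "x \<bullet> (R *v x) > 0" by (rule Rpd)
    then show ?thesis using Rx by (simp add: x_def inner_commute)
  qed
  define H where "H = Hmat h0 h1"
  define Q where "Q = transpose H ** Ri ** H"
  have sl: "s\<^sup>2 < 1" using sc c by (smt (verit) zero_less_power)
  have Qpd: "y \<bullet> (Q *v y) > 0" if "y \<noteq> 0" for y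
  proof -
    have "H *v y \<noteq> 0"
    proof
      assume "H *v y = 0"
      then have "y $ 0 = 0 \<and> y $ 1 = 0" unfolding H_def Hmat_mv
        using indep[OF h00 h11 h01 sl] by blast
      then show False using that vec2_eq0 by blast
    qed
    then have "(H *v y) \<bullet> (Ri *v (H *v y)) > 0" by (rule Ripd)
    then show ?thesis unfolding Q_def matrix_vector_mul_assoc[symmetric] dot_transpose .
  qed
  have invQ: "invertible Q" by (rule pd_invertible, rule Qpd)
  define u where "u = matrix_inv Q *v e1"
  define w where "w = Ri *v (H *v u)"
  have wz: "w_ZF s0 s1 c1 sn h0 h1 = w"
    unfolding w_ZF_def Let_def R_def[symmetric] Ri_def[symmetric] H_def[symmetric] Q_def[symmetric]
      w_def u_def by (simp add: matrix_vector_mul_assoc matrix_mul_assoc)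
  have "transpose H *v w = Q *v u"
    unfolding w_def Q_def by (simp add: matrix_vector_mul_assoc matrix_mul_assoc)
  also have "\<dots> = e1" unfolding u_def using invQ by (rule inv_apply)
  finally have THw: "transpose H *v w = e1" .
  have p1: "h0 \<bullet> w = 1" using arg_cong[OF THw, of "\<lambda>x. x $ 0"] unfolding H_def HT_comp e1_comp .
  have q0: "h1 \<bullet> w = 0" using arg_cong[OF THw, of "\<lambda>x. x $ 1"] unfolding H_def HT_comp e1_comp .
  have Rw: "R *v w = H *v u" unfolding w_def Ri_def using inv by (rule inv_apply)
  have Rw2: "R *v w = s0\<^sup>2 *\<^sub>R h0 + c1 *\<^sub>R h1 + sn\<^sup>2 *\<^sub>R w"
    unfolding R_def Rmat_mv p1 q0 by simp
  define a where "a = (u $ 0 - s0\<^sup>2) / sn\<^sup>2"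
  define b where "b = (u $ 1 - c1) / sn\<^sup>2"
  have snw: "sn\<^sup>2 *\<^sub>R w = (u $ 0 - s0\<^sup>2) *\<^sub>R h0 + (u $ 1 - c1) *\<^sub>R h1"
    using Rw Rw2 unfolding H_def Hmat_mv by (simp add: algebra_simps)
  have wab: "w = a *\<^sub>R h0 + b *\<^sub>R h1"
  proof -
    have "w = (1/sn\<^sup>2) *\<^sub>R (sn\<^sup>2 *\<^sub>R w)" using sn by simp
    also have "\<dots> = a *\<^sub>R h0 + b *\<^sub>R h1" unfolding snw a_def b_def
      by (simp add: scaleR_add_right)
    finally show ?thesis .
  qed
  have A1: "a + b * s = 1" using p1 h00 h01 unfolding wab by (simp add: inner_add_right)
  have A2: "a * s + b = 0" using q0 h11 h01 unfolding wab by (simp add: inner_add_right inner_commute)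
  have ww: "w \<bullet> w = a" using p1 q0 unfolding wab[of] by (simp add: inner_add_left)
  have ac: "a * c\<^sup>2 = 1" using A1 A2 sc by algebra
  have J: "J_MSE s0 s1 c1 sn h0 h1 w = sn\<^sup>2 * a"
    unfolding J_MSE_def rvec_def R_def[symmetric] Rw2
    using p1 q0 ww by (simp add: inner_add_right inner_commute)
  have "(s/c)\<^sup>2 + 1 = a" using ac sc c by (simp add: power_divide field_simps)
  then show ?thesis unfolding wz J by simp
qed

lemma quad_diff: "(d::real)\<^sup>2 * (A * x\<^sup>2 - 2 * gm * x) - d\<^sup>2 * (A * y\<^sup>2 - 2 * gm * y)
   = d\<^sup>2 * ((x - y) * (A * (x + y) - 2 * gm))"
  by (simp add: power2_eq_square algebra_simps)

theorem theorem1: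
  fixes h0 h1 :: "real ^ 'n" and \<tau> \<sigma>0 \<sigma>1 \<sigma>n c1 :: real
  assumes "CARD('n) \<ge> 2"
    and "norm h0 = 1" and "norm h1 = 1" and "h0 \<bullet> h1 = sin \<tau>"
    and "- (pi / 2) < \<tau>" and "\<tau> < pi / 2"
    and "\<sigma>0 > 0" and "\<sigma>1 > 0" and "\<sigma>n > 0"
    and "- (\<sigma>0 * \<sigma>1) \<le> c1" and "c1 \<le> \<sigma>0 * \<sigma>1"
  defines "\<delta> \<equiv> \<sigma>n\<^sup>2 * tan \<tau> - c1 * cos \<tau>"
    and "g \<equiv> (\<lambda>lam. lam * (cos \<tau>)\<^sup>2 + \<sigma>1\<^sup>2 * (cos \<tau>)\<^sup>2 + \<sigma>n\<^sup>2)"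
    and "M \<equiv> MSE \<sigma>0 \<sigma>1 c1 \<sigma>n h0 h1"
    and "\<gamma> \<equiv> \<sigma>n\<^sup>2 * tan \<tau> / (\<sigma>n\<^sup>2 * tan \<tau> - c1 * cos \<tau>)"
  shows "(\<forall>lam \<ge> 0. g lam > 0 \<and>
            M lam = \<delta>\<^sup>2 * (\<sigma>1\<^sup>2 * (cos \<tau>)\<^sup>2 + \<sigma>n\<^sup>2) / (g lam)\<^sup>2
                    - 2 * \<sigma>n\<^sup>2 * \<delta> * tan \<tau> / g lam + \<sigma>n\<^sup>2 * ((tan \<tau>)\<^sup>2 + 1))
     \<and> (\<delta> = 0 \<longrightarrow> (\<forall>lam \<ge> 0. M lam = \<sigma>n\<^sup>2 * ((tan \<tau>)\<^sup>2 + 1)))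
     \<and> (\<delta> \<noteq> 0 \<and> \<gamma> \<le> 0 \<longrightarrow>
          (\<forall>a b. 0 \<le> a \<and> a < b \<longrightarrow> M b < M a)
          \<and> (M \<longlongrightarrow> J_MSE \<sigma>0 \<sigma>1 c1 \<sigma>n h0 h1 (w_ZF \<sigma>0 \<sigma>1 c1 \<sigma>n h0 h1)) at_top
          \<and> (INF lam\<in>{0..}. M lam) = J_MSE \<sigma>0 \<sigma>1 c1 \<sigma>n h0 h1 (w_ZF \<sigma>0 \<sigma>1 c1 \<sigma>n h0 h1))
     \<and> (\<delta> \<noteq> 0 \<and> 0 < \<gamma> \<and> \<gamma> < 1 \<longrightarrow>
          (let lam\<^sub>0 = - (c1 * (\<sigma>1\<^sup>2 * (cos \<tau>)\<^sup>2 + \<sigma>n\<^sup>2)) / (\<sigma>n\<^sup>2 * sin \<tau>)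
           in lam\<^sub>0 > 0 \<and> (\<forall>lam \<ge> 0. M lam\<^sub>0 \<le> M lam)))
     \<and> (\<delta> \<noteq> 0 \<and> 1 \<le> \<gamma> \<longrightarrow> (\<forall>lam \<ge> 0. M 0 \<le> M lam))"
proof -
  define s where "s = sin \<tau>"
  define c where "c = cos \<tau>"
  define A where "A = \<sigma>1\<^sup>2 * c\<^sup>2 + \<sigma>n\<^sup>2"
  define C where "C = \<sigma>n\<^sup>2 * ((tan \<tau>)\<^sup>2 + 1)"
  have cp: "c > 0" unfolding c_def using assms(5,6) by (rule cos_gt_zero_pi)
  have sc: "s\<^sup>2 + c\<^sup>2 = 1" unfolding s_def c_def by simp
  have tn: "tan \<tau> = s / c" unfolding s_def c_def tan_def ..
  have h00: "h0 \<bullet> h0 = 1" using assms(2) by (metis norm_eq_1)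
  have h11: "h1 \<bullet> h1 = 1" using assms(3) by (metis norm_eq_1)
  have h01: "h0 \<bullet> h1 = s" using assms(4) s_def by simp
  have Ap: "A > 0" unfolding A_def using assms(9) by (simp add: add_nonneg_pos)
  have gA: "g lam = lam * c\<^sup>2 + A" for lam unfolding g_def A_def c_def by simp
  have gpos: "g lam > 0" if "lam \<ge> 0" for lam
    unfolding gA using that Ap cp by (simp add: add_nonneg_pos)
  have gA_le: "A \<le> g lam" if "lam \<ge> 0" for lam unfolding gA using that by simp
  have form: "M lam = \<delta>\<^sup>2 * A / (g lam)\<^sup>2 - 2 * \<sigma>n\<^sup>2 * \<delta> * tan \<tau> / g lam + C"
    if "lam \<ge> 0" for lam
    unfolding M_def \<delta>_def A_def C_def tn c_def[symmetric] 
    by (rule MSE_formula[OF h00 h11 h01 assms(7,8,10,11,9) that cp sc]) (simp add: gA A_def)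
  have ZF: "J_MSE \<sigma>0 \<sigma>1 c1 \<sigma>n h0 h1 (w_ZF \<sigma>0 \<sigma>1 c1 \<sigma>n h0 h1) = C"
    unfolding C_def tn by (rule ZF_formula[OF h00 h11 h01 assms(7,8,10,11,9) cp sc])
  have P1: "\<forall>lam \<ge> 0. g lam > 0 \<and>
            M lam = \<delta>\<^sup>2 * (\<sigma>1\<^sup>2 * (cos \<tau>)\<^sup>2 + \<sigma>n\<^sup>2) / (g lam)\<^sup>2
                    - 2 * \<sigma>n\<^sup>2 * \<delta> * tan \<tau> / g lam + \<sigma>n\<^sup>2 * ((tan \<tau>)\<^sup>2 + 1)"
    using gpos form unfolding A_def C_def c_def by simp
  have P2: "\<delta> = 0 \<longrightarrow> (\<forall>lam \<ge> 0. M lam = \<sigma>n\<^sup>2 * ((tan \<tau>)\<^sup>2 + 1))"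
    using form unfolding C_def by simp
  have gam: "\<gamma> = \<sigma>n\<^sup>2 * tan \<tau> / \<delta>" unfolding \<gamma>_def \<delta>_def ..
  have formX: "M lam = \<delta>\<^sup>2 * (A * (1 / g lam)\<^sup>2 - 2 * \<gamma> * (1 / g lam)) + C"
    if "lam \<ge> 0" "\<delta> \<noteq> 0" for lam
    unfolding form[OF that(1)] gam using that gpos[OF that(1)]
    by (simp add: field_simps power2_eq_square)
  have P3: "\<delta> \<noteq> 0 \<and> \<gamma> \<le> 0 \<longrightarrow>
          (\<forall>a b. 0 \<le> a \<and> a < b \<longrightarrow> M b < M a)
          \<and> (M \<longlongrightarrow> J_MSE \<sigma>0 \<sigma>1 c1 \<sigma>n h0 h1 (w_ZF \<sigma>0 \<sigma>1 c1 \<sigma>n h0 h1)) at_top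
          \<and> (INF lam\<in>{0..}. M lam) = J_MSE \<sigma>0 \<sigma>1 c1 \<sigma>n h0 h1 (w_ZF \<sigma>0 \<sigma>1 c1 \<sigma>n h0 h1)"
  proof (intro impI conjI allI)
    assume H: "\<delta> \<noteq> 0 \<and> \<gamma> \<le> 0"
    show "M b < M a" if "0 \<le> a \<and> a < b" for a b
    proof -
      have ga: "g a > 0" "g b > 0" using gpos that by auto
      have gab: "g a < g b" unfolding gA using that cp by simp
      have x: "1 / g b < 1 / g a" using ga gab by (simp add: frac_less2)
      have "M a - M b = \<delta>\<^sup>2 * ((1 / g a - 1 / g b) * (A * (1 / g a + 1 / g b) - 2 * \<gamma>))"
      proof -
        have "M a - M b = \<delta>\<^sup>2 * (A * (1 / g a)\<^sup>2 - 2 * \<gamma> * (1 / g a)) - \<delta>\<^sup>2 * (A * (1 / g b)\<^sup>2 - 2 * \<gamma> * (1 / g b))"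
          using formX[of a] formX[of b] that H by simp
        then show ?thesis by (simp only: quad_diff)
      qed
      moreover have "(1 / g a - 1 / g b) * (A * (1 / g a + 1 / g b) - 2 * \<gamma>) > 0"
      proof (rule mult_pos_pos)
        have "A * (1 / g a + 1 / g b) > 0" using ga Ap by (intro mult_pos_pos add_pos_pos) simp_all
        then show "A * (1 / g a + 1 / g b) - 2 * \<gamma> > 0" using H by linarith
      qed (use x in simp)
      moreover have "\<delta>\<^sup>2 > 0" using H by simp
      ultimately show ?thesis by (metis diff_gt_0_iff_gt mult_pos_pos)
    qed
    have lim_g: "filterlim g at_top at_top" unfolding gA
      by (rule filterlim_tendsto_add_at_top[OF tendsto_const, THEN filterlim_compose[rotated]]
          | (subst add.commute, rule filterlim_tendsto_add_at_top[OF tendsto_const]),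
          rule filterlim_at_top_mult_tendsto_pos[OF tendsto_const], use cp in simp, rule filterlim_ident)
    have inv0: "((\<lambda>lam. inverse (g lam)) \<longlongrightarrow> 0) at_top" by (rule tendsto_inverse_0_at_top[OF lim_g])
    have "((\<lambda>lam. \<delta>\<^sup>2 * (A * (inverse (g lam))\<^sup>2 - 2 * \<gamma> * inverse (g lam)) + C) \<longlongrightarrow>
           \<delta>\<^sup>2 * (A * 0\<^sup>2 - 2 * \<gamma> * 0) + C) at_top"
      by (intro tendsto_intros inv0)
    then have L: "((\<lambda>lam. \<delta>\<^sup>2 * (A * (inverse (g lam))\<^sup>2 - 2 * \<gamma> * inverse (g lam)) + C) \<longlongrightarrow> C) at_top"
      by simp
    have ev: "eventually (\<lambda>lam. \<delta>\<^sup>2 * (A * (inverse (g lam))\<^sup>2 - 2 * \<gamma> * inverse (g lam)) + C = M lam) at_top"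
      using eventually_ge_at_top[of "0::real"]
      by eventually_elim (use H formX in \<open>simp add: inverse_eq_divide\<close>)
    have LM: "(M \<longlongrightarrow> C) at_top" using Lim_transform_eventually[OF L ev] .
    then show "(M \<longlongrightarrow> J_MSE \<sigma>0 \<sigma>1 c1 \<sigma>n h0 h1 (w_ZF \<sigma>0 \<sigma>1 c1 \<sigma>n h0 h1)) at_top"
      unfolding ZF .
    have gtC: "C < M lam" if "lam \<ge> 0" for lam
    proof -
      have "M lam - C = \<delta>\<^sup>2 * ((1 / g lam) * (A * (1 / g lam) - 2 * \<gamma>))"
        unfolding formX[OF that conjunct1[OF H]] by (simp add: algebra_simps power2_eq_square)
      moreover have "(1 / g lam) * (A * (1 / g lam) - 2 * \<gamma>) > 0"
      proof (rule mult_pos_pos)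
        have "A * (1 / g lam) > 0" using gpos[OF that] Ap by (intro mult_pos_pos) simp_all
        then show "A * (1 / g lam) - 2 * \<gamma> > 0" using H by linarith
      qed (use gpos[OF that] in simp)
      moreover have "\<delta>\<^sup>2 > 0" using H by simp
      ultimately show ?thesis by (metis diff_gt_0_iff_gt mult_pos_pos)
    qed
    have bdd: "bdd_below (M ` {0..})" using gtC by (intro bdd_belowI2[of _ C]) (auto intro: less_imp_le)
    have "C \<le> (INF lam\<in>{0..}. M lam)" by (rule cINF_greatest) (auto intro: less_imp_le gtC)
    moreover have "(INF lam\<in>{0..}. M lam) \<le> C"
    proof (rule tendsto_lowerbound[OF LM])
      show "\<forall>\<^sub>F x in at_top. (INF lam\<in>{0..}. M lam) \<le> M x"
        using eventually_ge_at_top[of "0::real"] by eventually_elim (use bdd in \<open>auto intro: cINF_lower\<close>)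
    qed simp
    ultimately show "(INF lam\<in>{0..}. M lam) = J_MSE \<sigma>0 \<sigma>1 c1 \<sigma>n h0 h1 (w_ZF \<sigma>0 \<sigma>1 c1 \<sigma>n h0 h1)"
      unfolding ZF by simp
  qed
  have P4: "\<delta> \<noteq> 0 \<and> 0 < \<gamma> \<and> \<gamma> < 1 \<longrightarrow>
          (let lam\<^sub>0 = - (c1 * (\<sigma>1\<^sup>2 * (cos \<tau>)\<^sup>2 + \<sigma>n\<^sup>2)) / (\<sigma>n\<^sup>2 * sin \<tau>)
           in lam\<^sub>0 > 0 \<and> (\<forall>lam \<ge> 0. M lam\<^sub>0 \<le> M lam))"
  proof (intro impI)
    assume H: "\<delta> \<noteq> 0 \<and> 0 < \<gamma> \<and> \<gamma> < 1"
    define l0 where "l0 = - (c1 * (\<sigma>1\<^sup>2 * (cos \<tau>)\<^sup>2 + \<sigma>n\<^sup>2)) / (\<sigma>n\<^sup>2 * sin \<tau>)"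
    have l0': "l0 = - (c1 * A) / (\<sigma>n\<^sup>2 * s)" unfolding l0_def A_def c_def s_def ..
    have dc: "\<delta> * c = \<sigma>n\<^sup>2 * s - c1 * c\<^sup>2" unfolding \<delta>_def tn c_def[symmetric]
      using cp by (simp add: field_simps power2_eq_square)
    have gm: "\<gamma> = \<sigma>n\<^sup>2 * s / (\<delta> * c)" unfolding gam tn by simp
    have s0: "s \<noteq> 0" using H gm by auto
    have snp: "\<sigma>n\<^sup>2 > 0" using assms(9) by simp
    have gl0: "g l0 = A / \<gamma>" unfolding gA l0' gm dc using s0 assms(9) cp H
      by (simp add: field_simps power2_eq_square)
    have "l0 * c\<^sup>2 = A / \<gamma> - A" using gl0 unfolding gA by simp
    also have "\<dots> > 0" using H Ap by (simp add: field_simps)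
    finally have l0p: "l0 > 0" using cp by (simp add: zero_less_mult_iff)
    have "M l0 \<le> M lam" if l: "lam \<ge> 0" for lam
    proof -
      have "M lam - M l0 = \<delta>\<^sup>2 * (A * (1 / g lam)\<^sup>2 - 2 * \<gamma> * (1 / g lam)) - \<delta>\<^sup>2 * (A * (\<gamma> / A)\<^sup>2 - 2 * \<gamma> * (\<gamma> / A))"
        using formX[OF l] formX[of l0] l0p gl0 H by simp
      also have "\<dots> = \<delta>\<^sup>2 * A * (1 / g lam - \<gamma> / A)\<^sup>2"
        using Ap gpos[OF l] by (simp add: field_simps power2_eq_square)
      also have "\<dots> \<ge> 0" using Ap by simp
      finally show ?thesis by simp
    qed
    then show "let lam\<^sub>0 = - (c1 * (\<sigma>1\<^sup>2 * (cos \<tau>)\<^sup>2 + \<sigma>n\<^sup>2)) / (\<sigma>n\<^sup>2 * sin \<tau>)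
           in lam\<^sub>0 > 0 \<and> (\<forall>lam \<ge> 0. M lam\<^sub>0 \<le> M lam)"
      unfolding Let_def l0_def[symmetric] using l0p by blast
  qed
  have P5: "\<delta> \<noteq> 0 \<and> 1 \<le> \<gamma> \<longrightarrow> (\<forall>lam \<ge> 0. M 0 \<le> M lam)"
  proof (intro impI allI)
    fix lam :: real assume H: "\<delta> \<noteq> 0 \<and> 1 \<le> \<gamma>" and l: "lam \<ge> 0"
    have g0: "g 0 = A" unfolding gA by simp
    have x: "1 / g lam \<le> 1 / A" using gA_le[OF l] Ap by (simp add: frac_le)
    have xp: "1 / g lam > 0" using gpos[OF l] by simp
    have "M lam - M 0 = \<delta>\<^sup>2 * ((1 / g lam - 1 / A) * (A * (1 / g lam + 1 / A) - 2 * \<gamma>))"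
    proof -
      have "M lam - M 0 = \<delta>\<^sup>2 * (A * (1 / g lam)\<^sup>2 - 2 * \<gamma> * (1 / g lam)) - \<delta>\<^sup>2 * (A * (1 / A)\<^sup>2 - 2 * \<gamma> * (1 / A))"
        using formX[OF l] formX[of 0] g0 H by simp
      then show ?thesis by (simp only: quad_diff)
    qed
    moreover have "A * (1 / g lam + 1 / A) \<le> 2"
    proof -
      have "A * (1 / g lam) \<le> A * (1 / A)" using x Ap by (intro mult_left_mono) auto
      then show ?thesis using Ap by (simp add: distrib_left)
    qed
    then have "(1 / g lam - 1 / A) * (A * (1 / g lam + 1 / A) - 2 * \<gamma>) \<ge> 0"
      using x H by (intro mult_nonpos_nonpos) auto
    moreover have "\<delta>\<^sup>2 \<ge> 0" by simp
    ultimately show "M 0 \<le> M lam" by (metis diff_ge_0_iff_ge mult_nonneg_nonneg)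
  qed
  show ?thesis using P1 P2 P3 P4 P5 by blast
qed

end
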